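(* Let $L\ne\{0,1\}$ be a totally ordered C-lattice domain in which every element is a join of principal elements. The following are equivalent: (i) $L$ is sharp; (ii) $L$ is pseudo-Dedekind; (iii) $L$ is isomorphic (as an ordered multiplicative lattice) to $\mathbb{Z}_-$ or to $\mathbb{R}_1$.
   Context: A multiplicative lattice is a complete lattice $(L,\le)$ with bottom $0$ and top $1$ which is also a commutative monoid with identity $1$ such that $a(\bigvee_\alpha b_\alpha)=\bigvee_\alpha(ab_\alpha)$ for all $a,b_\alpha\in L$. For $x,y\in L$, $(y:x)=\bigvee\{a\in L: ax\le y\}$. An element $c$ is compact if $c\le\bigvee S$ implies $c\le\bigvee T$ for some finite $T\subseteq S$. A C-lattice is a multiplicative lattice in which $1$ is compact, the product of two compact elements is compact, and every element is a join of compact elements. A proper element $p\ne1$ is prime if $xy\le p$ implies $x\le p$ or $y\le p$; $L$ is a domain if $0$ is prime. An element $x$ is principal if $y\wedge zx=((y:x)\wedge z)x$ and $y\vee(z:x)=((yx\vee z):x)$ for all $y,z\in L$. $L$ is sharp if whenever $a_1a_2\le b$ with $a_1,a_2,b\in L$, there exist $b_1,b_2\in L$ with $a_i\le b_i$ ($i=1,2$) and $b=b_1b_2$. $L$ is pseudo-Dedekind if $(x:a)$ is principal whenever $x,a\in L$ and $x$ is principal. $\mathbb{Z}_-$ is the set of integers $\le0$ together with a symbol $-\infty$, with the usual order and with addition as multiplication (so $0$ is the top/identity and $-\infty$ the bottom). $\mathbb{R}_1$ is the set of all intervals $(r,\infty]$ and $[r,\infty]$ with $r$ a nonnegative real number,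 together with $\{\infty\}$, ordered by inclusion and with interval (Minkowski) addition as multiplication (so $[0,\infty]$ is the top/identity and $\{\infty\}$ the bottom); it is isomorphic to the ideal lattice of a valuation domain with value group $\mathbb{R}$. *)

theory Defs
  imports "HOL-Library.Extended_Real"
begin

text \<open>A multiplicative lattice: the complete lattice structure is that of the type 'a
  (bottom = bot = 0, top = top = 1); the multiplication is the parameter m.\<close>

definition mult_lattice :: "('a::complete_lattice \<Rightarrow> 'a \<Rightarrow> 'a) \<Rightarrow> bool" where
  "mult_lattice m \<longleftrightarrow>
     (\<forall>a b c. m (m a b) c = m a (m b c)) \<and>
     (\<forall>a b. m a b = m b a) \<and>
     (\<forall>a. m top a = a) \<and>
     (\<forall>a B. m a (Sup B) = Sup ((\<lambda>b. m a b) ` B))"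

definition res :: "('a::complete_lattice \<Rightarrow> 'a \<Rightarrow> 'a) \<Rightarrow> 'a \<Rightarrow> 'a \<Rightarrow> 'a" where
  "res m y x = Sup {a. m a x \<le> y}"   (* (y : x) *)

definition compact_el :: "'a::complete_lattice \<Rightarrow> bool" where
  "compact_el c \<longleftrightarrow> (\<forall>S. c \<le> Sup S \<longrightarrow> (\<exists>T. T \<subseteq> S \<and> finite T \<and> c \<le> Sup T))"

definition C_lattice :: "('a::complete_lattice \<Rightarrow> 'a \<Rightarrow> 'a) \<Rightarrow> bool" where
  "C_lattice (m :: 'a \<Rightarrow> 'a \<Rightarrow> 'a) \<longleftrightarrow> mult_lattice m \<and> compact_el (top :: 'a) \<and>
     (\<forall>a b. compact_el a \<longrightarrow> compact_el b \<longrightarrow> compact_el (m a b)) \<and>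
     (\<forall>x :: 'a. \<exists>S. (\<forall>s\<in>S. compact_el s) \<and> x = Sup S)"

definition prime_el :: "('a::complete_lattice \<Rightarrow> 'a \<Rightarrow> 'a) \<Rightarrow> 'a \<Rightarrow> bool" where
  "prime_el m p \<longleftrightarrow> p \<noteq> top \<and> (\<forall>x y. m x y \<le> p \<longrightarrow> x \<le> p \<or> y \<le> p)"

definition lattice_domain :: "('a::complete_lattice \<Rightarrow> 'a \<Rightarrow> 'a) \<Rightarrow> bool" where
  "lattice_domain m \<longleftrightarrow> prime_el m bot"

definition principal_el :: "('a::complete_lattice \<Rightarrow> 'a \<Rightarrow> 'a) \<Rightarrow> 'a \<Rightarrow> bool" where
  "principal_el m x \<longleftrightarrow>
     (\<forall>y z. inf y (m z x) = m (inf (res m y x) z) x \<and>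
            sup y (res m z x) = res m (sup (m y x) z) x)"

definition sharp :: "('a::complete_lattice \<Rightarrow> 'a \<Rightarrow> 'a) \<Rightarrow> bool" where
  "sharp m \<longleftrightarrow> (\<forall>a1 a2 b. m a1 a2 \<le> b \<longrightarrow>
      (\<exists>b1 b2. a1 \<le> b1 \<and> a2 \<le> b2 \<and> b = m b1 b2))"

definition pseudo_Dedekind :: "('a::complete_lattice \<Rightarrow> 'a \<Rightarrow> 'a) \<Rightarrow> bool" where
  "pseudo_Dedekind m \<longleftrightarrow> (\<forall>x a. principal_el m x \<longrightarrow> principal_el m (res m x a))"

definition ml_iso :: "('a::complete_lattice \<Rightarrow> 'a \<Rightarrow> 'a) \<Rightarrow> 'b set \<Rightarrow> ('b \<Rightarrow> 'b \<Rightarrow> bool)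
    \<Rightarrow> ('b \<Rightarrow> 'b \<Rightarrow> 'b) \<Rightarrow> bool" where
  "ml_iso m C le mu \<longleftrightarrow> (\<exists>f. bij_betw f UNIV C \<and>
      (\<forall>a b. a \<le> b \<longleftrightarrow> le (f a) (f b)) \<and>
      (\<forall>a b. f (m a b) = mu (f a) (f b)))"

text \<open>\<open>\<int>_-\<close>: None stands for -\<infinity>, Some k for the integer k \<le> 0.\<close>

definition Zm_carrier :: "int option set" where
  "Zm_carrier = insert None {Some k | k. k \<le> 0}"

fun Zm_le :: "int option \<Rightarrow> int option \<Rightarrow> bool" where
  "Zm_le None _ = True"
| "Zm_le (Some a) None = False"
| "Zm_le (Some a) (Some b) = (a \<le> b)"

fun Zm_mult :: "int option \<Rightarrow> int option \<Rightarrow> int option" where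
  "Zm_mult (Some a) (Some b) = Some (a + b)"
| "Zm_mult _ _ = None"

definition R1_carrier :: "ereal set set" where
  "R1_carrier = {{x. ereal r < x} | r. r \<ge> 0} \<union> {{x. ereal r \<le> x} | r. r \<ge> 0} \<union> {{\<infinity>}}"

definition R1_le :: "ereal set \<Rightarrow> ereal set \<Rightarrow> bool" where
  "R1_le A B \<longleftrightarrow> A \<subseteq> B"

definition R1_mult :: "ereal set \<Rightarrow> ereal set \<Rightarrow> ereal set" where
  "R1_mult A B = {x + y | x y. x \<in> A \<and> y \<in> B}"

end

theory Submission
  imports Defs
begin
lemma Sup_finite_in:
  fixes T :: "'a::complete_lattice set"
  assumes lin: "\<forall>x y :: 'a. x \<le> y \<or> y \<le> x" and "finite T" "T \<noteq> {}"
  shows "Sup T \<in> T"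
  using assms(2,3)
proof (induction T rule: finite_ne_induct)
  case (singleton x) then show ?case by simp
next
  case (insert x F)
  have "Sup (insert x F) = sup x (Sup F)" by simp
  then show ?case using lin insert by (metis insertCI sup.absorb1 sup.absorb2)
qed

locale TL =
  fixes m :: "'a::complete_lattice \<Rightarrow> 'a \<Rightarrow> 'a"
  assumes mlat: "mult_lattice m"
    and topc: "compact_el (top::'a)"
    and dom: "lattice_domain m"
    and lin: "\<forall>x y :: 'a. x \<le> y \<or> y \<le> x"
    and pg: "\<forall>x :: 'a. \<exists>S. (\<forall>s\<in>S. principal_el m s) \<and> x = Sup S"
begin

lemma assoc: "m (m a b) c = m a (m b c)" using mlat unfolding mult_lattice_def by blast
lemma comm: "m a b = m b a" using mlat unfolding mult_lattice_def by blast
lemma unitl[simp]: "m top a = a" using mlat unfolding mult_lattice_def by blast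
lemma unitr[simp]: "m a top = a" using comm unitl by metis
lemma distr: "m a (Sup B) = Sup ((\<lambda>b. m a b) ` B)" using mlat unfolding mult_lattice_def by blast
lemma distl: "m (Sup B) a = Sup ((\<lambda>b. m b a) ` B)" using distr comm by (metis (no_types, lifting) image_cong)
lemma zr[simp]: "m a bot = bot" using distr[of a "{}"] by simp
lemma zl[simp]: "m bot a = bot" using zr comm by metis
lemma ac: "m a (m b c) = m b (m a c)" using assoc comm by metis

lemma mono_r: "a \<le> b \<Longrightarrow> m c a \<le> m c b"
proof -
  assume "a \<le> b"
  then have "b = Sup {a, b}" by (simp add: sup.absorb2)
  then have "m c b = Sup {m c a, m c b}" using distr[of c "{a,b}"] by simp
  then show ?thesis by (metis Sup_insert le_sup_iff order_refl)
qed
lemma mono_l: "a \<le> b \<Longrightarrow> m a c \<le> m b c" using mono_r comm by metis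
lemma mono2: "a \<le> b \<Longrightarrow> c \<le> d \<Longrightarrow> m a c \<le> m b d" using mono_r mono_l order_trans by metis
lemma le_top_r: "m a b \<le> a" using mono_r[of b top a] by simp
lemma le_top_l: "m a b \<le> b" using mono_l[of a top b] by simp

lemma linr: "\<not> x \<le> y \<Longrightarrow> y < (x::'a)"
proof -
  assume "\<not> x \<le> y"
  moreover have "x \<le> y \<or> y \<le> x" using lin by blast
  ultimately show "y < x" by (auto simp: less_le)
qed
lemma not_le: "(\<not> x \<le> y) = (y < (x::'a))"
proof
  assume "\<not> x \<le> y" then show "y < x" by (rule linr)
next
  assume "y < x" then show "\<not> x \<le> y" by (simp add: less_le_not_le)
qed

lemma bot_ne_top: "(bot::'a) \<noteq> top" using dom unfolding lattice_domain_def prime_el_def by simp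
lemma domain: "m x y = bot \<Longrightarrow> x = bot \<or> y = bot"
proof -
  assume h: "m x y = bot"
  have "x \<le> bot \<or> y \<le> bot" using dom h unfolding lattice_domain_def prime_el_def by simp
  then show ?thesis using bot.extremum_uniqueI by blast
qed
lemma mult_nz: "x \<noteq> bot \<Longrightarrow> y \<noteq> bot \<Longrightarrow> m x y \<noteq> bot" using domain by blast

lemma res_ge: "m a x \<le> y \<Longrightarrow> a \<le> res m y x" unfolding res_def by (simp add: Sup_upper)
lemma res_le: "m (res m y x) x \<le> y"
  unfolding res_def distl by (auto intro!: Sup_least)
lemma res_iff: "a \<le> res m y x \<longleftrightarrow> m a x \<le> y"
  using res_ge res_le mono_l order_trans by metis

lemma eq_by_le: "(\<And>a. a \<le> X \<longleftrightarrow> a \<le> Y) \<Longrightarrow> X = (Y::'a)" by (meson order.antisym order_refl)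

lemma res_res: "res m (res m y w) x = res m y (m x w)"
  by (rule eq_by_le) (simp add: res_iff assoc)

lemma res_top[simp]: "res m y top = y" by (rule eq_by_le) (simp add: res_iff)
lemma res_bot[simp]: "res m y bot = top" by (rule eq_by_le) (simp add: res_iff)

abbreviation "pr x \<equiv> principal_el m x"

lemma pr_top: "pr top" unfolding principal_el_def by simp
lemma pr_bot: "pr bot" unfolding principal_el_def by simp

lemma pr_mult: assumes x: "pr x" and w: "pr w" shows "pr (m x w)"
  unfolding principal_el_def
proof (intro allI conjI)
  fix y z
  have X1: "\<And>y z. inf y (m z x) = m (inf (res m y x) z) x"
   and X2: "\<And>y z. sup y (res m z x) = res m (sup (m y x) z) x" using x unfolding principal_el_def by auto
  have W1: "\<And>y z. inf y (m z w) = m (inf (res m y w) z) w"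
   and W2: "\<And>y z. sup y (res m z w) = res m (sup (m y w) z) w" using w unfolding principal_el_def by auto
  have "inf y (m z (m x w)) = inf y (m (m z x) w)" by (simp add: assoc)
  also have "\<dots> = m (inf (res m y w) (m z x)) w" by (rule W1)
  also have "\<dots> = m (m (inf (res m (res m y w) x) z) x) w" by (simp add: X1)
  also have "\<dots> = m (inf (res m y (m x w)) z) (m x w)" by (simp add: res_res assoc)
  finally show "inf y (m z (m x w)) = m (inf (res m y (m x w)) z) (m x w)" .
  have "sup y (res m z (m x w)) = sup y (res m (res m z w) x)" by (simp add: res_res)
  also have "\<dots> = res m (sup (m y x) (res m z w)) x" by (rule X2)
  also have "\<dots> = res m (res m (sup (m (m y x) w) z) w) x" by (simp add: W2)
  also have "\<dots> = res m (sup (m y (m x w)) z) (m x w)" by (simp add: res_res assoc)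
  finally show "sup y (res m z (m x w)) = res m (sup (m y (m x w)) z) (m x w)" .
qed

lemma pr_div: "pr x \<Longrightarrow> y \<le> x \<Longrightarrow> y = m (res m y x) x"
proof -
  assume "pr x" "y \<le> x"
  then have "inf y (m top x) = m (inf (res m y x) top) x" unfolding principal_el_def by blast
  then show ?thesis using \<open>y \<le> x\<close> by (simp add: inf.absorb1)
qed

lemma pr_cancel_res: "pr x \<Longrightarrow> x \<noteq> bot \<Longrightarrow> res m (m b x) x = b"
proof -
  assume "pr x" "x \<noteq> bot"
  have "m (res m bot x) x \<le> bot" by (rule res_le)
  then have "m (res m bot x) x = bot" using bot.extremum_uniqueI by blast
  then have "res m bot x = bot" using domain \<open>x \<noteq> bot\<close> by blast
  then show ?thesis using \<open>pr x\<close> unfolding principal_el_def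
    by (metis sup_bot.right_neutral)
qed

lemma cancel: "pr x \<Longrightarrow> x \<noteq> bot \<Longrightarrow> m x a \<le> m x b \<Longrightarrow> a \<le> b"
  by (metis comm pr_cancel_res res_iff)
lemma cancel_eq: "pr x \<Longrightarrow> x \<noteq> bot \<Longrightarrow> m x a = m x b \<Longrightarrow> a = b"
  using cancel[of x a b] cancel[of x b a] by (simp add: order.antisym)

lemma pr_compact:
  assumes x: "pr x" "x \<noteq> bot" and le: "x \<le> Sup S"
  shows "\<exists>s\<in>S. x \<le> s"
proof (rule ccontr)
  assume nt: "\<not> (\<exists>s\<in>S. x \<le> s)"
  then have lt: "\<forall>s\<in>S. s \<le> x" using linr by (meson less_imp_le)
  let ?T = "(\<lambda>s. res m s x) ` S"
  have "m (Sup ?T) x = Sup ((\<lambda>t. m t x) ` ?T)" by (rule distl)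
  also have "\<dots> = Sup S" using lt x(1) pr_div
    by (simp add: image_image)
  finally have "m x top \<le> m x (Sup ?T)" using le by (simp add: comm)
  then have "top \<le> Sup ?T" using cancel x by blast
  then obtain T' where T': "T' \<subseteq> ?T" "finite T'" "top \<le> Sup T'"
    using topc unfolding compact_el_def by blast
  have "T' \<noteq> {}" using T' bot_ne_top by (metis Sup_empty top_le)
  then have "Sup T' \<in> T'" using Sup_finite_in[OF lin T'(2)] by blast
  then obtain s where "s \<in> S" "Sup T' = res m s x" using T'(1) by auto
  then have sS: "s \<in> S" and rt: "res m s x = top" using T'(3) top_le by auto
  have "s = m (res m s x) x" using pr_div[OF x(1)] lt sS by blast
  then have "s = x" using rt by simp
  then show False using nt \<open>s \<in> S\<close> by blast
qed

lemma sup_pr: "x = Sup {p. pr p \<and> p \<le> x}"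
proof -
  obtain S where S: "\<forall>s\<in>S. pr s" "x = Sup S" using pg by blast
  then have "S \<subseteq> {p. pr p \<and> p \<le> x}" by (auto simp: Sup_upper)
  then have "x \<le> Sup {p. pr p \<and> p \<le> x}" using S(2) by (simp add: Sup_subset_mono)
  moreover have "Sup {p. pr p \<and> p \<le> x} \<le> x" by (rule Sup_least) simp
  ultimately show ?thesis by (rule order.antisym)
qed

lemma exists_pr_below: "x \<noteq> bot \<Longrightarrow> \<exists>p. pr p \<and> p \<noteq> bot \<and> p \<le> x"
  using sup_pr[of x] Sup_bot_conv(1)[of "{p. pr p \<and> p \<le> x}"] by auto

lemma compact2:
  assumes "pr x" "x \<noteq> bot" "x \<le> m (Sup S1) (Sup S2)"
  shows "\<exists>s1\<in>S1. \<exists>s2\<in>S2. x \<le> m s1 s2"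
proof -
  have "x \<le> Sup ((\<lambda>b. m (Sup S1) b) ` S2)" using assms(3) distr by metis
  from pr_compact[OF assms(1,2) this] obtain s2 where s2: "s2 \<in> S2" "x \<le> m (Sup S1) s2" by auto
  then have "x \<le> Sup ((\<lambda>b. m b s2) ` S1)" using distl by metis
  from pr_compact[OF assms(1,2) this] obtain s1 where "s1 \<in> S1" "x \<le> m s1 s2" by auto
  then show ?thesis using s2 by blast
qed

end

primrec pwr :: "('a::complete_lattice \<Rightarrow> 'a \<Rightarrow> 'a) \<Rightarrow> 'a \<Rightarrow> nat \<Rightarrow> 'a" where
  "pwr m x 0 = top"
| "pwr m x (Suc n) = m x (pwr m x n)"

context TL
begin

abbreviation "pw \<equiv> pwr m"

lemma le_bot_eq[simp]: "(x::'a) \<le> bot \<longleftrightarrow> x = bot" by (rule bot.extremum_unique)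

lemma pw_add: "pw x (a + b) = m (pw x a) (pw x b)"
  by (induction a) (simp_all add: assoc)
lemma pw_base: "pw (m x y) n = m (pw x n) (pw y n)"
  by (induction n) (simp_all add: assoc ac)
lemma pw_pw: "pw (pw x a) b = pw x (a * b)"
  by (induction b) (simp_all add: pw_add)
lemma pw_one[simp]: "pw x (Suc 0) = x" by simp
lemma pw_pr: "pr x \<Longrightarrow> pr (pw x n)"
  by (induction n) (simp_all add: pr_top pr_mult)
lemma pw_nz: "x \<noteq> bot \<Longrightarrow> pw x n \<noteq> bot"
  by (induction n) (simp_all add: mult_nz bot_ne_top[symmetric])
lemma pw_mono: "x \<le> y \<Longrightarrow> pw x n \<le> pw y n"
  by (induction n) (simp_all add: mono2)
lemma pw_strict:
  assumes "pr y" "x < y" shows "pw x (Suc k) < pw y (Suc k)"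
proof -
  have y: "y \<noteq> bot" using assms by auto
  have "pw x (Suc k) \<le> m x (pw y k)" using pw_mono assms by (simp add: mono_r)
  moreover have "m x (pw y k) \<le> pw y (Suc k)" using assms by (simp add: mono_l)
  moreover have "pw x (Suc k) \<noteq> pw y (Suc k)"
  proof
    assume "pw x (Suc k) = pw y (Suc k)"
    with calculation have "m (pw y k) x = m (pw y k) y" by (simp add: comm order.antisym)
    then have "x = y" using cancel_eq pw_pr pw_nz assms y by blast
    then show False using assms by simp
  qed
  ultimately show ?thesis by (simp add: less_le)
qed
lemma pw_anti_le: "b \<le> a \<Longrightarrow> pw x a \<le> pw x b"
  by (metis le_Suc_ex le_top_r pw_add)
lemma pw_Suc_less:
  assumes "pr x" "x \<noteq> bot" "x \<noteq> top" shows "pw x (Suc n) < pw x n"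
proof -
  have "pw x (Suc n) \<le> pw x n" by (rule pw_anti_le) simp
  moreover have "pw x (Suc n) \<noteq> pw x n"
  proof
    assume "pw x (Suc n) = pw x n"
    then have "m (pw x n) x = m (pw x n) top" by (simp add: comm)
    then show False using cancel_eq pw_pr pw_nz assms by blast
  qed
  ultimately show ?thesis by (simp add: less_le)
qed
lemma pw_le_iff:
  assumes "pr x" "x \<noteq> bot" "x \<noteq> top" shows "pw x a \<le> pw x b \<longleftrightarrow> b \<le> a"
proof
  assume h: "pw x a \<le> pw x b"
  show "b \<le> a"
  proof (rule ccontr)
    assume "\<not> b \<le> a"
    then have "pw x b \<le> pw x (Suc a)" by (intro pw_anti_le) simp
    also have "\<dots> < pw x a" using pw_Suc_less assms by blast
    finally show False using h by simp
  qed
qed (rule pw_anti_le)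
lemma pw_less_iff:
  assumes "pr x" "x \<noteq> bot" "x \<noteq> top" shows "pw x a < pw x b \<longleftrightarrow> b < a"
  using pw_le_iff[OF assms] by (metis not_le not_less)
lemma pw_inj:
  assumes "pr x" "x \<noteq> bot" "x \<noteq> top" "pw x a = pw x b" shows "a = b"
  using pw_le_iff[OF assms(1-3)] assms(4) by (metis order.antisym order_refl)

lemma res_bot_nz: "a \<noteq> bot \<Longrightarrow> res m bot a = bot"
proof -
  assume a: "a \<noteq> bot"
  have "m (res m bot a) a = bot" using res_le[of bot a] bot.extremum_uniqueI by blast
  then show ?thesis using domain a by blast
qed

lemma sharp_PD: assumes "sharp m" shows "pseudo_Dedekind m"
  unfolding pseudo_Dedekind_def
proof (intro allI impI)
  fix x a assume x: "pr x"
  show "pr (res m x a)"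
  proof (cases "x = bot")
    case True
    then show ?thesis
      by (cases "a = bot") (simp_all add: res_bot_nz pr_top pr_bot)
  next
    case xnz: False
    have "m (res m x a) a \<le> x" by (rule res_le)
    then obtain b1 b2 where b: "res m x a \<le> b1" "a \<le> b2" "x = m b1 b2"
      using assms unfolding sharp_def by blast
    obtain S1 where S1: "\<forall>s\<in>S1. pr s" "b1 = Sup S1" using pg by blast
    obtain S2 where S2: "\<forall>s\<in>S2. pr s" "b2 = Sup S2" using pg by blast
    obtain s1 s2 where s: "s1 \<in> S1" "s2 \<in> S2" "x \<le> m s1 s2"
      using compact2[OF x xnz] b S1 S2 by (metis order_refl)
    have le1: "s1 \<le> b1" "s2 \<le> b2" using s S1 S2 by (auto simp: Sup_upper)
    have xe: "x = m s1 s2" using s(3) mono2[OF le1] b(3) by (simp add: order.antisym)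
    have s1nz: "s1 \<noteq> bot" "s2 \<noteq> bot" using xe xnz by auto
    have "m s1 b2 = m s1 s2" using xe b(3) mono_r[OF le1(2), of s1] mono_l[OF le1(1), of b2]
      by (simp add: order.antisym)
    then have "b2 = s2" using cancel_eq S1 s s1nz by metis
    then have "m s2 b1 = m s2 s1" using xe b(3) by (simp add: comm)
    then have b1: "b1 = s1" using cancel_eq S2 s s1nz by metis
    have "m b1 a \<le> x" using b mono_r by metis
    then have "b1 \<le> res m x a" by (rule res_ge)
    then have "res m x a = b1" using b(1) by (simp add: order.antisym)
    then show ?thesis using b1 S1 s by simp
  qed
qed

definition Mx :: 'a where "Mx = Sup {y. y \<noteq> top}"

lemma le_M: "y \<noteq> top \<Longrightarrow> y \<le> Mx" unfolding Mx_def by (simp add: Sup_upper)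
lemma top_cpt: "(top::'a) \<le> Sup S \<Longrightarrow> \<exists>T. T \<subseteq> S \<and> finite T \<and> top \<le> Sup T"
  using topc unfolding compact_el_def by blast

lemma M_ne_top: "Mx \<noteq> top"
proof
  assume "Mx = top"
  then have "top \<le> Sup {y::'a. y \<noteq> top}" unfolding Mx_def by (rule eq_refl[OF sym])
  then obtain T where T: "T \<subseteq> {y::'a. y \<noteq> top}" "finite T" "top \<le> Sup T"
    using top_cpt by blast
  have "T \<noteq> {}"
  proof
    assume "T = {}"
    then have "top \<le> (bot::'a)" using T(3) by simp
    then show False using bot_ne_top bot.extremum_uniqueI by metis
  qed
  then have "Sup T \<in> T" using Sup_finite_in[OF lin T(2)] by blast
  then show False using T by (auto simp: top_le)
qed

end

locale TLP = TL +
  assumes PD: "pseudo_Dedekind m"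
begin

lemma res_pr: "pr x \<Longrightarrow> pr (res m x a)" using PD unfolding pseudo_Dedekind_def by blast

lemma arch:
  assumes w: "pr w" "w \<noteq> bot" "w \<noteq> top" and y: "y \<noteq> bot"
  shows "\<exists>n. pw w n < y"
proof (rule ccontr)
  assume "\<not> ?thesis"
  then have yle: "\<And>n. y \<le> pw w n" using not_le by blast
  define p where "p = Inf (range (pw w))"
  have yp: "y \<le> p" unfolding p_def using yle by (auto intro: Inf_greatest)
  then have pnz: "p \<noteq> bot" using y by (metis bot.extremum_unique)
  obtain x where x: "pr x" "x \<noteq> bot" "x \<le> p" using exists_pr_below pnz by blast
  have ple: "\<And>n. p \<le> pw w n" unfolding p_def by (simp add: Inf_lower)
  have r: "res m p w \<le> pw w n" for n
  proof -
    have "m (res m p w) w \<le> pw w (Suc n)" using res_le ple order_trans by metis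
    then have "m w (res m p w) \<le> m w (pw w n)" by (simp add: comm)
    then show ?thesis using cancel w by blast
  qed
  then have "res m p w \<le> p" unfolding p_def by (auto intro: Inf_greatest)
  moreover have "p \<le> w" using ple[of 1] by simp
  ultimately have "p \<le> m p w" using pr_div[OF w(1)] mono_l by metis
  then have pw: "m p w = p" using le_top_r by (simp add: order.antisym)
  define a where "a = res m x p"
  have apr: "pr a" unfolding a_def using res_pr x by blast
  have ap: "m a p \<le> x" unfolding a_def by (rule res_le)
  have xa: "x \<le> a" unfolding a_def by (rule res_ge) (rule le_top_r)
  have anz: "a \<noteq> bot" using xa x by auto
  show False
  proof (cases "w \<le> a")
    case True
    then have "m p w \<le> m p a" by (rule mono_r)
    then have "p \<le> m a p" using pw by (simp add: comm)
    then have "x = p" using ap x by (simp add: order.antisym)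
    then have "m p w = m p top" using pw by simp
    then show False using cancel_eq x \<open>x = p\<close> w by blast
  next
    case False
    then have aw: "a \<le> w" using not_le less_imp_le by blast
    define a' where "a' = res m a w"
    have a_eq: "a = m a' w" unfolding a'_def using pr_div[OF w(1) aw] .
    have "m a' p = m a p" using a_eq pw by (metis assoc comm)
    then have "a' \<le> a" using ap unfolding a_def by (metis res_ge)
    moreover have "a \<le> a'" using a_eq le_top_r by metis
    ultimately have "a = a'" by simp
    then have "m a w = m a top" using a_eq by (simp add: comm)
    then show False using cancel_eq apr anz w by blast
  qed
qed

end

context TLP
begin

lemma M_nz: assumes nt: "(UNIV::'a set) \<noteq> {bot, top}" shows "Mx \<noteq> bot"
proof -
  obtain y :: 'a where "y \<noteq> bot" "y \<noteq> top" using nt by blast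
  then show ?thesis using le_M by (metis le_bot_eq)
qed

lemma caseA:
  assumes Mpr: "pr Mx" and nt: "(UNIV::'a set) \<noteq> {bot, top}"
  shows "ml_iso m Zm_carrier Zm_le Zm_mult"
proof -
  have M: "pr Mx" "Mx \<noteq> bot" "Mx \<noteq> top" using Mpr M_nz[OF nt] M_ne_top by auto
  have allpw: "\<exists>n. y = pw Mx n" if y: "y \<noteq> bot" for y
  proof -
    obtain N where N: "pw Mx N < y" using arch[OF M y] by blast
    have bnd: "k \<le> N" if "y \<le> pw Mx k" for k
    proof (rule ccontr)
      assume "\<not> k \<le> N"
      then have "pw Mx k \<le> pw Mx N" by (intro pw_anti_le) simp
      then show False using N that by simp
    qed
    define n where "n = (GREATEST n. y \<le> pw Mx n)"
    have y0: "y \<le> pw Mx 0" by simp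
    have yn: "y \<le> pw Mx n" unfolding n_def by (rule GreatestI_nat[of "\<lambda>n. y \<le> pw Mx n" 0 N, OF y0 bnd])
    have ysn: "\<not> y \<le> pw Mx (Suc n)"
    proof
      assume h: "y \<le> pw Mx (Suc n)"
      have "Suc n \<le> (GREATEST n. y \<le> pw Mx n)" by (rule Greatest_le_nat[of "\<lambda>n. y \<le> pw Mx n" "Suc n" N, OF h bnd])
      then have "Suc n \<le> n" by (simp add: n_def[symmetric])
      then show False by simp
    qed
    define c where "c = res m y (pw Mx n)"
    have yc: "y = m c (pw Mx n)" unfolding c_def using pr_div[OF pw_pr[OF M(1)] yn] .
    have "c = top"
    proof (rule ccontr)
      assume "c \<noteq> top"
      then have "c \<le> Mx" by (rule le_M)
      then have "y \<le> m Mx (pw Mx n)" using yc mono_l by metis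
      then show False using ysn by simp
    qed
    then show ?thesis using yc by auto
  qed
  have cases_y: "y = bot \<or> (\<exists>n. y = pw Mx n)" for y using allpw by blast
  have pwnz: "pw Mx n \<noteq> bot" for n using pw_nz M by blast
  have pwinj: "pw Mx a = pw Mx b \<longleftrightarrow> a = b" for a b using pw_inj[OF M] by blast
  define ex where "ex y = (THE n. y = pw Mx n)" for y
  have ex_pw: "ex (pw Mx n) = n" for n unfolding ex_def using pwinj by auto
  define f where "f y = (if y = bot then None else Some (- int (ex y)))" for y
  have f_bot: "f bot = None" unfolding f_def by simp
  have f_pw: "f (pw Mx n) = Some (- int n)" for n unfolding f_def using pwnz ex_pw by simp
  have ord: "a \<le> b \<longleftrightarrow> Zm_le (f a) (f b)" for a b
  proof -
    consider "a = bot" | i where "a = pw Mx i" using cases_y by blast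
    then show ?thesis
    proof cases
      case 1 then show ?thesis by (simp add: f_bot)
    next
      case (2 i)
      consider "b = bot" | j where "b = pw Mx j" using cases_y by blast
      then show ?thesis
      proof cases
        case 1 then show ?thesis using 2 pwnz f_bot f_pw by simp
      next
        case (2 j) then show ?thesis using \<open>a = pw Mx i\<close> f_pw pw_le_iff[OF M] by simp
      qed
    qed
  qed
  have mul: "f (m a b) = Zm_mult (f a) (f b)" for a b
  proof -
    consider "a = bot" | i where "a = pw Mx i" using cases_y by blast
    then show ?thesis
    proof cases
      case 1 then show ?thesis by (simp add: f_bot)
    next
      case (2 i)
      consider "b = bot" | j where "b = pw Mx j" using cases_y by blast
      then show ?thesis
      proof cases
        case 1 then show ?thesis using 2 f_bot f_pw by simp
      next
        case (2 j)
        then have "m a b = pw Mx (i + j)" using \<open>a = pw Mx i\<close> by (simp add: pw_add)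
        then show ?thesis using \<open>a = pw Mx i\<close> 2 f_pw by simp
      qed
    qed
  qed
  have inj: "inj f"
  proof (rule injI)
    fix a b assume "f a = f b"
    then have "a \<le> b" "b \<le> a" using ord by (metis Zm_le.simps(1,3) order_refl option.exhaust)+
    then show "a = b" by simp
  qed
  have img: "range f = Zm_carrier"
  proof
    show "range f \<subseteq> Zm_carrier"
    proof
      fix z assume "z \<in> range f"
      then obtain a where "z = f a" by blast
      then show "z \<in> Zm_carrier" unfolding Zm_carrier_def f_def by auto
    qed
  next
    show "Zm_carrier \<subseteq> range f"
    proof
      fix z assume "z \<in> Zm_carrier"
      then consider "z = None" | k where "z = Some k" "k \<le> 0" unfolding Zm_carrier_def by blast
      then show "z \<in> range f"
      proof cases
        case 1 then show ?thesis using f_bot by (metis rangeI)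
      next
        case (2 k)
        then have "f (pw Mx (nat (- k))) = z" using f_pw by simp
        then show ?thesis by (metis rangeI)
      qed
    qed
  qed
  show ?thesis unfolding ml_iso_def bij_betw_def using inj img ord mul by blast
qed

end

lemma real_eq_by_eps:
  fixes d :: real
  assumes "\<And>q::nat. q \<ge> 1 \<Longrightarrow> \<bar>d\<bar> \<le> 2 / real q"
  shows "d = 0"
proof (rule ccontr)
  assume "d \<noteq> 0"
  then have pos: "\<bar>d\<bar> > 0" by simp
  obtain q :: nat where q: "2 / \<bar>d\<bar> < real q" using reals_Archimedean2 by blast
  have "0 < 2 / \<bar>d\<bar>" using pos by simp
  then have "0 < real q" using q by linarith
  then have q1: "q \<ge> 1" by simp
  have "2 < real q * \<bar>d\<bar>" using q pos by (simp add: divide_less_eq)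
  moreover have "\<bar>d\<bar> * real q \<le> 2" using assms[OF q1] q1 by (simp add: le_divide_eq)
  ultimately show False by (simp add: mult.commute)
qed

lemma real_le_by_eps:
  fixes a b :: real
  assumes "\<And>e. e > 0 \<Longrightarrow> a \<le> b + e"
  shows "a \<le> b"
  using assms by (metis add.commute add_le_imp_le_left field_le_epsilon)

lemma abs_aux:
  fixes V X Y A B i :: real
  assumes "A + B \<le> V" "V \<le> A + B + i + i" "A \<le> X" "X \<le> A + i" "B \<le> Y" "Y \<le> B + i"
  shows "\<bar>V - (X + Y)\<bar> \<le> i + i"
  using assms unfolding abs_le_iff by linarith

locale TLR = TLP +
  fixes u :: 'a
  assumes u: "pr u" "u \<noteq> bot" "u \<noteq> top"
    and nMpr: "\<not> pr Mx"
begin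

abbreviation "P x \<equiv> pr x \<and> x \<noteq> bot"

lemma P_mult: "P x \<Longrightarrow> P y \<Longrightarrow> P (m x y)" using pr_mult mult_nz by blast
lemma P_pw: "P x \<Longrightarrow> P (pw x n)" using pw_pr pw_nz by blast
lemma P_top: "P top" using pr_top bot_ne_top by auto

definition nq :: "'a \<Rightarrow> nat \<Rightarrow> nat" where "nq x q = (GREATEST n. pw x q \<le> pw u n)"

lemma nq_bound: assumes "P x" shows "\<exists>N. \<forall>n. pw x q \<le> pw u n \<longrightarrow> n \<le> N"
proof -
  obtain N where N: "pw u N < pw x q" using arch[OF u] P_pw[OF assms] by blast
  have "n \<le> N" if "pw x q \<le> pw u n" for n
  proof (rule ccontr)
    assume "\<not> n \<le> N"
    then have "pw u n \<le> pw u N" by (intro pw_anti_le) simp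
    then show False using N that by (simp add: not_le[symmetric])
  qed
  then show ?thesis by blast
qed

lemma nq_le: assumes "P x" shows "pw x q \<le> pw u (nq x q)"
proof -
  obtain N where N: "\<And>n. pw x q \<le> pw u n \<Longrightarrow> n \<le> N" using nq_bound[OF assms] by blast
  have "pw x q \<le> pw u 0" by simp
  then show ?thesis unfolding nq_def by (rule GreatestI_nat[of "\<lambda>n. pw x q \<le> pw u n" 0 N, OF _ N])
qed

lemma nq_iff: assumes "P x" shows "pw x q \<le> pw u n \<longleftrightarrow> n \<le> nq x q"
proof
  assume h: "pw x q \<le> pw u n"
  obtain N where N: "\<And>n. pw x q \<le> pw u n \<Longrightarrow> n \<le> N" using nq_bound[OF assms] by blast
  show "n \<le> nq x q" unfolding nq_def by (rule Greatest_le_nat[of "\<lambda>n. pw x q \<le> pw u n" n N, OF h N])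
next
  assume "n \<le> nq x q"
  then have "pw u (nq x q) \<le> pw u n" by (rule pw_anti_le)
  then show "pw x q \<le> pw u n" using nq_le[OF assms] order_trans by blast
qed

lemma nq_Suc_less: assumes "P x" shows "pw u (Suc (nq x q)) < pw x q"
  using nq_iff[OF assms, of q "Suc (nq x q)"] not_le by auto

lemma nq_key: assumes "P x" "q \<ge> 1" "r \<ge> 1"
  shows "nq x q * r < Suc (nq x r) * q"
proof -
  have "pw (pw x q) r \<le> pw (pw u (nq x q)) r" using nq_le[OF assms(1)] by (rule pw_mono)
  then have A: "pw x (q * r) \<le> pw u (nq x q * r)" by (simp add: pw_pw)
  obtain q' where q': "q = Suc q'" using assms(2) by (cases q) auto
  have "pw (pw u (Suc (nq x r))) (Suc q') < pw (pw x r) (Suc q')"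
    by (rule pw_strict) (use P_pw[OF assms(1)] nq_Suc_less[OF assms(1)] in auto)
  then have B: "pw u (Suc (nq x r) * q) < pw x (r * q)" unfolding q' by (simp only: pw_pw)
  have "pw u (Suc (nq x r) * q) < pw u (nq x q * r)" using A B by (simp add: mult.commute)
  then show ?thesis using pw_less_iff[OF u] by blast
qed

definition v :: "'a \<Rightarrow> real" where "v x = (SUP q\<in>{1..}. real (nq x q) / real q)"

lemma v_bdd: assumes "P x" shows "bdd_above ((\<lambda>q. real (nq x q) / real q) ` {1..})"
proof (rule bdd_aboveI2)
  fix q :: nat assume "q \<in> {1..}"
  then have "nq x q * 1 < Suc (nq x 1) * q" using nq_key[OF assms, of q 1] by simp
  then have "real (nq x q) < real (Suc (nq x 1) * q)" by (simp only: mult_1_right of_nat_less_iff)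
  then have "real (nq x q) < real (Suc (nq x 1)) * real q" by (simp only: of_nat_mult)
  then show "real (nq x q) / real q \<le> real (Suc (nq x 1))" using \<open>q \<in> {1..}\<close> by (simp add: divide_le_eq)
qed

lemma v_ge: assumes "P x" "q \<ge> 1" shows "real (nq x q) / real q \<le> v x"
  unfolding v_def using assms by (intro cSUP_upper v_bdd) auto

lemma v_le: assumes "P x" "r \<ge> 1" shows "v x \<le> real (Suc (nq x r)) / real r"
  unfolding v_def
proof (rule cSUP_least)
  show "{1::nat..} \<noteq> {}" by auto
  fix q :: nat assume "q \<in> {1..}"
  then have "nq x q * r < Suc (nq x r) * q" using nq_key assms by simp
  then have "real (nq x q) * real r < real (Suc (nq x r)) * real q"
    by (simp only: of_nat_mult[symmetric] of_nat_less_iff)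
  then show "real (nq x q) / real q \<le> real (Suc (nq x r)) / real r"
    using \<open>q \<in> {1..}\<close> assms(2) by (simp add: divide_simps)
qed

lemma B1: assumes "P x" "q \<ge> 1" "pw x q \<le> pw u p" shows "real p / real q \<le> v x"
proof -
  have "p \<le> nq x q" using nq_iff[OF assms(1)] assms(3) by blast
  then have "real p / real q \<le> real (nq x q) / real q" by (simp add: divide_right_mono)
  then show ?thesis using v_ge[OF assms(1,2)] by linarith
qed

lemma B2: assumes "P x" "q \<ge> 1" "pw u p < pw x q" shows "v x \<le> real p / real q"
proof -
  have "\<not> p \<le> nq x q" using nq_iff[OF assms(1)] assms(3) not_le by blast
  then have "Suc (nq x q) \<le> p" by simp
  then have "real (Suc (nq x q)) / real q \<le> real p / real q" by (simp add: divide_right_mono)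
  then show ?thesis using v_le[OF assms(1,2)] by linarith
qed

lemma v_nonneg: assumes "P x" shows "0 \<le> v x"
  using v_ge[OF assms, of 1] by simp

lemma strict_mult: assumes "pr d" "a < b" "c < d" shows "m a c < m b d"
proof -
  have 1: "m a c \<le> m a d" using assms by (simp add: mono_r)
  have 2: "m a d \<le> m b d" using assms by (simp add: mono_l)
  have "m a c \<noteq> m b d"
  proof
    assume "m a c = m b d"
    then have "m d a = m d b" using 1 2 by (simp add: comm order.antisym)
    then have "a = b" using cancel_eq assms by (metis bot.extremum_strict)
    then show False using assms by simp
  qed
  then show ?thesis using 1 2 by (simp add: less_le)
qed

lemma v_mult: assumes x: "P x" and y: "P y" shows "v (m x y) = v x + v y"
proof -
  have xy: "P (m x y)" using P_mult x y by blast
  have "\<bar>v (m x y) - (v x + v y)\<bar> \<le> 2 / real q" if q: "q \<ge> 1" for q :: nat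
  proof -
    define a where "a = nq x q"
    define b where "b = nq y q"
    have "pw (m x y) q \<le> pw u (a + b)"
      unfolding pw_base pw_add a_def b_def using nq_le x y by (simp add: mono2)
    then have L: "real (a + b) / real q \<le> v (m x y)" using B1 xy q by blast
    have "m (pw u (Suc a)) (pw u (Suc b)) < m (pw x q) (pw y q)"
      unfolding a_def b_def by (rule strict_mult) (use nq_Suc_less x y pw_pr in auto)
    then have "pw u (Suc a + Suc b) < pw (m x y) q" by (simp only: pw_add pw_base)
    then have U: "v (m x y) \<le> real (Suc a + Suc b) / real q" using B2 xy q by blast
    have xa: "real a / real q \<le> v x" "v x \<le> real (Suc a) / real q"
      unfolding a_def using v_ge v_le x q by auto
    have yb: "real b / real q \<le> v y" "v y \<le> real (Suc b) / real q"
      unfolding b_def using v_ge v_le y q by auto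
    have e1: "real (a + b) / real q = real a / real q + real b / real q" by (simp add: add_divide_distrib)
    have e2: "real (Suc a + Suc b) / real q = real a / real q + real b / real q + 1 / real q + 1 / real q"
      by (simp add: add_divide_distrib)
    have e5: "2 / real q = 1 / real q + 1 / real q" by (metis add_divide_distrib one_add_one)
    have e3: "real (Suc a) / real q = real a / real q + 1 / real q" by (simp add: add_divide_distrib)
    have e4: "real (Suc b) / real q = real b / real q + 1 / real q" by (simp add: add_divide_distrib)
    have p1: "real a / real q + real b / real q \<le> v (m x y)" using L unfolding e1 .
    have p2: "v (m x y) \<le> real a / real q + real b / real q + 1 / real q + 1 / real q" using U unfolding e2 .
    have p4: "v x \<le> real a / real q + 1 / real q" using xa(2) unfolding e3 .
    have p6: "v y \<le> real b / real q + 1 / real q" using yb(2) unfolding e4 .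
    show ?thesis unfolding e5 by (rule abs_aux[OF p1 p2 xa(1) p4 yb(1) p6])
  qed
  then have "v (m x y) - (v x + v y) = 0" by (rule real_eq_by_eps)
  then show ?thesis by simp
qed

lemma v_anti: assumes x: "P x" and y: "P y" and le: "x \<le> y" shows "v y \<le> v x"
  unfolding v_def[of y]
proof (rule cSUP_least)
  show "{1::nat..} \<noteq> {}" by auto
  fix q :: nat assume q: "q \<in> {1..}"
  have "pw x q \<le> pw u (nq y q)" using pw_mono[OF le] nq_le[OF y] order_trans by blast
  then have "nq y q \<le> nq x q" using nq_iff[OF x] by blast
  then have "real (nq y q) / real q \<le> real (nq x q) / real q" by (simp add: divide_right_mono)
  then show "real (nq y q) / real q \<le> v x" using v_ge[OF x] q by fastforce
qed

lemma v_top: "v top = 0"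
  using v_mult[OF P_top P_top] by simp

lemma v_pos: assumes x: "P x" and xt: "x \<noteq> top" shows "0 < v x"
proof -
  obtain k where k: "pw x k < u" using arch[of x u] x xt u by blast
  have k1: "k \<ge> 1"
  proof (rule ccontr)
    assume "\<not> k \<ge> 1" then have "k = 0" by simp
    then show False using k by (simp add: not_le[symmetric])
  qed
  have "pw x k \<le> pw u 1" using k by simp
  then have "real 1 / real k \<le> v x" using B1 x k1 by blast
  moreover have "0 < real 1 / real k" using k1 by simp
  ultimately show ?thesis by linarith
qed

lemma v_strict: assumes x: "P x" and y: "P y" and lt: "x < y" shows "v y < v x"
proof -
  define c where "c = res m x y"
  have c: "pr c" unfolding c_def using res_pr x by blast
  have xc: "x = m c y" unfolding c_def using pr_div y lt by (simp add: less_imp_le)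
  have cnz: "c \<noteq> bot" using xc x by auto
  have ct: "c \<noteq> top" using xc lt by auto
  have "v x = v c + v y" using xc v_mult c cnz y by simp
  moreover have "0 < v c" using v_pos c cnz ct by blast
  ultimately show ?thesis by simp
qed

lemma v_le_iff: assumes x: "P x" and y: "P y" shows "x \<le> y \<longleftrightarrow> v y \<le> v x"
  using v_anti[OF x y] v_strict[OF y x] not_le by (meson not_less)

lemma v_inj: assumes x: "P x" and y: "P y" and "v x = v y" shows "x = y"
  using v_le_iff[OF x y] v_le_iff[OF y x] assms(3) by (simp add: order.antisym)

lemma v_pw: assumes d: "P d" shows "v (pw d k) = real k * v d"
proof (induction k)
  case 0 then show ?case by (simp add: v_top)
next
  case (Suc k)
  have "v (pw d (Suc k)) = v d + v (pw d k)" using v_mult[OF d P_pw[OF d]] by simp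
  then show ?case using Suc by (simp add: algebra_simps)
qed

end

lemma nat_floor_ex: "0 \<le> (x::real) \<Longrightarrow> \<exists>n::nat. real n \<le> x \<and> x < real n + 1"
proof -
  assume x: "0 \<le> x"
  then have "0 \<le> \<lfloor>x\<rfloor>" by simp
  then have e: "real (nat \<lfloor>x\<rfloor>) = real_of_int \<lfloor>x\<rfloor>" by simp
  show ?thesis by (rule exI[of _ "nat \<lfloor>x\<rfloor>"]) (simp only: e of_int_floor_le real_of_int_floor_add_one_gt simp_thms)
qed

context TLR
begin

lemma half: assumes w: "P w" "w \<noteq> top" shows "\<exists>d. P d \<and> d \<noteq> top \<and> 2 * v d \<le> v w"
proof -
  have wM: "w \<le> Mx" using le_M w by blast
  have wne: "w \<noteq> Mx" using nMpr w by auto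
  have "\<exists>s. pr s \<and> s \<le> Mx \<and> \<not> s \<le> w"
  proof (rule ccontr)
    assume "\<not> (\<exists>s. pr s \<and> s \<le> Mx \<and> \<not> s \<le> w)"
    then have h: "Sup {p. pr p \<and> p \<le> Mx} \<le> w" by (auto intro!: Sup_least)
    have "Mx = Sup {p. pr p \<and> p \<le> Mx}" by (rule sup_pr)
    then have "Mx \<le> w" using h by (rule ord_eq_le_trans)
    then show False using wM wne by simp
  qed
  then obtain s where s: "pr s" "s \<le> Mx" "\<not> s \<le> w" by blast
  have ws: "w < s" using s(3) not_le by blast
  have st: "s \<noteq> top" using s(2) M_ne_top by (metis top.extremum_unique)
  have sb: "s \<noteq> bot" using ws by auto
  define d where "d = res m w s"
  have d: "pr d" unfolding d_def using res_pr w by blast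
  have wd: "w = m d s" unfolding d_def using pr_div s(1) ws by (simp add: less_imp_le)
  have db: "d \<noteq> bot" using wd w by auto
  have dt: "d \<noteq> top" using wd ws by auto
  have vw: "v w = v d + v s" using wd v_mult d db s(1) sb by simp
  show ?thesis
  proof (cases "v d \<le> v s")
    case True then show ?thesis using vw d db dt by (intro exI[of _ d]) simp
  next
    case False then show ?thesis using vw s(1) sb st by (intro exI[of _ s]) simp
  qed
qed

lemma small: "\<exists>d. P d \<and> d \<noteq> top \<and> 2 ^ k * v d \<le> v u"
proof (induction k)
  case 0 then show ?case using u by (intro exI[of _ u]) simp
next
  case (Suc k)
  then obtain d where d: "P d" "d \<noteq> top" "2 ^ k * v d \<le> v u" by blast
  obtain d' where d': "P d'" "d' \<noteq> top" "2 * v d' \<le> v d" using half d by blast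
  have "2 ^ Suc k * v d' = 2 ^ k * (2 * v d')" by simp
  also have "\<dots> \<le> 2 ^ k * v d" using mult_left_mono[OF d'(3), of "2 ^ k"] by simp
  also have "\<dots> \<le> v u" by (rule d(3))
  finally show ?case using d d' by (intro exI[of _ d']) simp
qed

lemma small_eps: assumes e: "(0::real) < e" shows "\<exists>d. P d \<and> d \<noteq> top \<and> v d < e"
proof -
  obtain k where k: "v u / e < 2 ^ k" using real_arch_pow[of 2 "v u / e"] by auto
  obtain d where d: "P d" "d \<noteq> top" "2 ^ k * v d \<le> v u" using small by blast
  have "v u < e * 2 ^ k" using k e by (simp add: divide_less_eq mult.commute)
  then have "2 ^ k * v d < e * 2 ^ k" using d(3) by linarith
  then have "v d * 2 ^ k < e * 2 ^ k" by (simp add: mult.commute)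
  then have "v d < e" by simp
  then show ?thesis using d by blast
qed

lemma dense: assumes r: "0 \<le> r" and e: "(0::real) < e" shows "\<exists>z. P z \<and> r < v z \<and> v z < r + e"
proof -
  obtain d where d: "P d" "d \<noteq> top" "v d < e" using small_eps e by blast
  have dp: "0 < v d" using v_pos d by blast
  have "0 \<le> r / v d" using r dp by simp
  then obtain n :: nat where n: "real n \<le> r / v d" "r / v d < real n + 1" using nat_floor_ex by blast
  have z: "P (pw d (Suc n))" using P_pw d by blast
  have vz: "v (pw d (Suc n)) = (real n + 1) * v d" using v_pw[OF d(1), of "Suc n"] by (simp add: algebra_simps)
  have "r < (real n + 1) * v d" using n(2) dp by (simp add: divide_less_eq)
  moreover have "real n * v d \<le> r" using n(1) dp by (simp add: le_divide_eq)
  then have "(real n + 1) * v d < r + e" using d(3) by (simp add: algebra_simps)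
  ultimately show ?thesis using z vz by (intro exI[of _ "pw d (Suc n)"]) simp
qed

definition J :: "real \<Rightarrow> 'a" where "J r = Sup {p. P p \<and> r < v p}"

lemma surj: assumes r: "0 \<le> r" shows "\<exists>e. P e \<and> v e = r"
proof -
  obtain x where x: "P x" "r < v x" using dense[OF r, of 1] by auto
  define c where "c = res m x (J r)"
  have cpr: "pr c" unfolding c_def using res_pr x by blast
  have cJ: "m c (J r) \<le> x" unfolding c_def by (rule res_le)
  have xc: "x \<le> c" unfolding c_def by (rule res_ge) (rule le_top_r)
  have cP: "P c" using cpr xc x by auto
  have lower: "v x - r \<le> v c + e" if e: "e > 0" for e
  proof -
    obtain y where y: "P y" "r < v y" "v y < r + e" using dense[OF r e] by blast
    have "y \<le> J r" unfolding J_def using y by (auto intro: Sup_upper)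
    then have "m c y \<le> x" using cJ mono_r order_trans by metis
    then have "v x \<le> v (m c y)" using v_anti P_mult cP y x by blast
    then show ?thesis using v_mult cP y by simp
  qed
  have upper: "v c \<le> v x - r + e" if e: "e > 0" for e
  proof -
    have pos: "0 \<le> v x - r" using x by simp
    obtain z where z: "P z" "v x - r < v z" "v z < v x - r + e" using dense[OF pos e] by blast
    have "m z (J r) \<le> x" unfolding J_def distr
    proof (rule Sup_least)
      fix t assume "t \<in> m z ` {p. P p \<and> r < v p}"
      then obtain p where p: "P p" "r < v p" "t = m z p" by blast
      have "v x < v (m z p)" using v_mult z p by simp
      then have "\<not> x \<le> m z p" using v_anti P_mult z p x by (meson not_less)
      then show "t \<le> x" using p not_le less_imp_le by blast
    qed
    then have "z \<le> c" unfolding c_def by (rule res_ge)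
    then have "v c \<le> v z" using v_anti z cP by blast
    then show ?thesis using z by simp
  qed
  have vc: "v c = v x - r"
  proof (rule order.antisym)
    show "v c \<le> v x - r" by (rule real_le_by_eps) (rule upper)
    show "v x - r \<le> v c" by (rule real_le_by_eps) (rule lower)
  qed
  define e where "e = res m x c"
  have epr: "pr e" unfolding e_def using res_pr x by blast
  have xe: "x = m e c" unfolding e_def using pr_div cpr xc by blast
  have eP: "P e" using epr xe x by auto
  have "v x = v e + v c" using xe v_mult eP cP by simp
  then show ?thesis using eP vc by (intro exI[of _ e]) simp
qed

definition V :: "'a \<Rightarrow> real set" where "V y = {t. \<exists>p. P p \<and> p \<le> y \<and> v p = t}"

lemma V_nonneg: "t \<in> V y \<Longrightarrow> 0 \<le> t" unfolding V_def using v_nonneg by auto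

lemma V_up: assumes t: "t \<in> V y" and tt: "t \<le> t'" shows "t' \<in> V y"
proof -
  obtain p where p: "P p" "p \<le> y" "v p = t" using t unfolding V_def by blast
  obtain e where e: "P e" "v e = t'" using surj V_nonneg[OF t] tt by (meson order_trans)
  have "e \<le> p" using v_le_iff[OF e(1) p(1)] e p tt by simp
  then show ?thesis unfolding V_def using e p order_trans by blast
qed

lemma V_nonempty: "y \<noteq> bot \<Longrightarrow> V y \<noteq> {}"
  unfolding V_def using exists_pr_below by blast

lemma V_bot: "V bot = {}" unfolding V_def by auto

lemma V_le_iff: "y \<le> y' \<longleftrightarrow> V y \<subseteq> V y'"
proof
  assume "y \<le> y'" then show "V y \<subseteq> V y'" unfolding V_def using order_trans by blast
next
  assume sub: "V y \<subseteq> V y'"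
  have "Sup {p. pr p \<and> p \<le> y} \<le> y'"
  proof (rule Sup_least)
    fix p assume p: "p \<in> {p. pr p \<and> p \<le> y}"
    show "p \<le> y'"
    proof (cases "p = bot")
      case True then show ?thesis by simp
    next
      case False
      then have "v p \<in> V y" unfolding V_def using p by blast
      then obtain p' where p': "P p'" "p' \<le> y'" "v p' = v p" using sub unfolding V_def by blast
      then have "p' = p" using v_inj p False by blast
      then show ?thesis using p' by simp
    qed
  qed
  moreover have "y = Sup {p. pr p \<and> p \<le> y}" by (rule sup_pr)
  ultimately show "y \<le> y'" by simp
qed

lemma V_mult: "V (m y y') = {a + b | a b. a \<in> V y \<and> b \<in> V y'}"
proof
  show "{a + b | a b. a \<in> V y \<and> b \<in> V y'} \<subseteq> V (m y y')"
  proof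
    fix t assume "t \<in> {a + b | a b. a \<in> V y \<and> b \<in> V y'}"
    then obtain p p' where p: "P p" "p \<le> y" "P p'" "p' \<le> y'" "t = v p + v p'" unfolding V_def by blast
    then have "P (m p p')" "m p p' \<le> m y y'" "v (m p p') = t" using P_mult mono2 v_mult by auto
    then show "t \<in> V (m y y')" unfolding V_def by blast
  qed
next
  show "V (m y y') \<subseteq> {a + b | a b. a \<in> V y \<and> b \<in> V y'}"
  proof
    fix t assume "t \<in> V (m y y')"
    then obtain q where q: "P q" "q \<le> m y y'" "v q = t" unfolding V_def by blast
    have "q \<le> m (Sup {p. pr p \<and> p \<le> y}) (Sup {p. pr p \<and> p \<le> y'})"
      using q(2) sup_pr[of y] sup_pr[of y'] by simp
    then obtain s1 s2 where s: "s1 \<in> {p. pr p \<and> p \<le> y}" "s2 \<in> {p. pr p \<and> p \<le> y'}" "q \<le> m s1 s2"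
      using compact2 q(1) by blast
    have nz: "s1 \<noteq> bot" "s2 \<noteq> bot" using s(3) q(1) by auto
    have "v (m s1 s2) \<le> v q" using v_anti q(1) P_mult s nz by blast
    then have le: "v s1 + v s2 \<le> v q" using v_mult s nz by simp
    have a: "v s1 \<in> V y" unfolding V_def using s nz by blast
    have "v s2 \<in> V y'" unfolding V_def using s nz by blast
    then have b: "v q - v s1 \<in> V y'" using V_up le by simp
    have "t = v s1 + (v q - v s1)" using q by simp
    then show "t \<in> {a + b | a b. a \<in> V y \<and> b \<in> V y'}" using a b by blast
  qed
qed

lemma V_J: assumes r: "0 \<le> r" shows "V (J r) = {t. r < t}"
proof
  show "V (J r) \<subseteq> {t. r < t}"
  proof
    fix t assume "t \<in> V (J r)"
    then obtain p where p: "P p" "p \<le> J r" "v p = t" unfolding V_def by blast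
    then obtain s where s: "s \<in> {p. P p \<and> r < v p}" "p \<le> s" using pr_compact unfolding J_def by blast
    then have "v s \<le> v p" using v_anti p by blast
    then show "t \<in> {t. r < t}" using s p by simp
  qed
next
  show "{t. r < t} \<subseteq> V (J r)"
  proof
    fix t assume t: "t \<in> {t. r < t}"
    then obtain e where e: "P e" "v e = t" using surj r by (metis less_eq_real_def mem_Collect_eq order_trans)
    then have "e \<le> J r" unfolding J_def using t by (auto intro: Sup_upper)
    then show "t \<in> V (J r)" unfolding V_def using e by blast
  qed
qed

lemma V_e: assumes e: "P e" shows "V e = {t. v e \<le> t}"
proof
  show "V e \<subseteq> {t. v e \<le> t}" unfolding V_def using v_anti e by auto
next
  have "v e \<in> V e" unfolding V_def using e by blast
  then show "{t. v e \<le> t} \<subseteq> V e" using V_up by blast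
qed

lemma V_shape: assumes y: "y \<noteq> bot"
  shows "\<exists>r\<ge>0. V y = {t. r \<le> t} \<or> V y = {t. r < t}"
proof -
  define r where "r = Inf (V y)"
  have ne: "V y \<noteq> {}" using V_nonempty y by blast
  have bdd: "bdd_below (V y)" by (rule bdd_belowI[of _ 0]) (rule V_nonneg)
  have r0: "0 \<le> r" unfolding r_def by (rule cInf_greatest[OF ne]) (rule V_nonneg)
  have lo: "r \<le> t" if "t \<in> V y" for t unfolding r_def using bdd that by (rule cInf_lower[rotated])
  have gt: "t \<in> V y" if "r < t" for t
  proof -
    have "Inf (V y) < t" using that unfolding r_def .
    then have "\<exists>x\<in>V y. x < t" by (simp only: cInf_less_iff[OF ne bdd])
    then obtain t' where "t' \<in> V y" "t' < t" by blast
    then show ?thesis using V_up by (meson less_imp_le)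
  qed
  show ?thesis
  proof (cases "r \<in> V y")
    case True
    have "V y = {t. r \<le> t}"
    proof (rule set_eqI)
      fix t
      show "t \<in> V y \<longleftrightarrow> t \<in> {t. r \<le> t}" using lo[of t] V_up[OF True, of t] by blast
    qed
    then show ?thesis using r0 by blast
  next
    case False
    have "V y = {t. r < t}"
    proof (rule set_eqI)
      fix t
      have "t \<in> V y \<Longrightarrow> r < t" using lo[of t] False by (cases "t = r") (auto simp: less_le)
      then show "t \<in> V y \<longleftrightarrow> t \<in> {t. r < t}" using gt[of t] by blast
    qed
    then show ?thesis using r0 by blast
  qed
qed

end

lemma ins_ereal_closed: "insert \<infinity> (ereal ` {t. r \<le> t}) = {x. ereal r \<le> x}"
proof (rule set_eqI)
  fix x :: ereal show "x \<in> insert \<infinity> (ereal ` {t. r \<le> t}) \<longleftrightarrow> x \<in> {x. ereal r \<le> x}"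
    by (cases x) auto
qed

lemma ins_ereal_open: "insert \<infinity> (ereal ` {t. r < t}) = {x. ereal r < x}"
proof (rule set_eqI)
  fix x :: ereal show "x \<in> insert \<infinity> (ereal ` {t. r < t}) \<longleftrightarrow> x \<in> {x. ereal r < x}"
    by (cases x) auto
qed

lemma R1_mult_ins:
  "R1_mult (insert \<infinity> (ereal ` A)) (insert \<infinity> (ereal ` B)) = insert \<infinity> (ereal ` {a + b | a b. a \<in> A \<and> b \<in> B})"
proof (rule set_eqI)
  fix z :: ereal
  show "z \<in> R1_mult (insert \<infinity> (ereal ` A)) (insert \<infinity> (ereal ` B)) \<longleftrightarrow>
        z \<in> insert \<infinity> (ereal ` {a + b | a b. a \<in> A \<and> b \<in> B})"
  proof
    assume "z \<in> R1_mult (insert \<infinity> (ereal ` A)) (insert \<infinity> (ereal ` B))"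
    then obtain x y where xy: "z = x + y" "x \<in> insert \<infinity> (ereal ` A)" "y \<in> insert \<infinity> (ereal ` B)"
      unfolding R1_mult_def by blast
    consider "x = \<infinity>" | "y = \<infinity>" | a b where "x = ereal a" "y = ereal b" "a \<in> A" "b \<in> B"
      using xy(2,3) by blast
    then show "z \<in> insert \<infinity> (ereal ` {a + b | a b. a \<in> A \<and> b \<in> B})"
    proof cases
      case 1 then show ?thesis using xy by auto
    next
      case 2 then show ?thesis using xy by auto
    next
      case (3 a b)
      have "a + b \<in> {a + b | a b. a \<in> A \<and> b \<in> B}" using 3 by blast
      then have "ereal (a + b) \<in> ereal ` {a + b | a b. a \<in> A \<and> b \<in> B}" by (rule imageI)
      then show ?thesis using xy 3 by simp
    qed
  next
    assume "z \<in> insert \<infinity> (ereal ` {a + b | a b. a \<in> A \<and> b \<in> B})"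
    then consider "z = \<infinity>" | a b where "a \<in> A" "b \<in> B" "z = ereal (a + b)" by blast
    then show "z \<in> R1_mult (insert \<infinity> (ereal ` A)) (insert \<infinity> (ereal ` B))"
    proof cases
      case 1
      have "(\<infinity>::ereal) = \<infinity> + \<infinity>" by simp
      then show ?thesis unfolding R1_mult_def 1 by blast
    next
      case (2 a b)
      then have "z = ereal a + ereal b" by simp
      then show ?thesis unfolding R1_mult_def using 2 by blast
    qed
  qed
qed

context TLR
begin

definition F :: "'a \<Rightarrow> ereal set" where "F y = insert \<infinity> (ereal ` V y)"

lemma F_carrier: "F y \<in> R1_carrier"
proof (cases "y = bot")
  case True then show ?thesis unfolding F_def R1_carrier_def by (simp add: V_bot)
next
  case False
  then obtain r where r: "r \<ge> 0" "V y = {t. r \<le> t} \<or> V y = {t. r < t}" using V_shape by blast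
  then show ?thesis unfolding F_def R1_carrier_def using ins_ereal_closed ins_ereal_open by auto
qed

lemma F_le: "y \<le> y' \<longleftrightarrow> F y \<subseteq> F y'"
proof -
  have "V y \<subseteq> V y' \<longleftrightarrow> F y \<subseteq> F y'" unfolding F_def by auto
  then show ?thesis using V_le_iff by blast
qed

lemma F_mult: "F (m y y') = R1_mult (F y) (F y')"
  unfolding F_def V_mult R1_mult_ins ..

lemma F_range: "range F = R1_carrier"
proof
  show "range F \<subseteq> R1_carrier" using F_carrier by blast
next
  show "R1_carrier \<subseteq> range F"
  proof
    fix X assume "X \<in> R1_carrier"
    then consider r where "r \<ge> 0" "X = {x. ereal r < x}" | r where "r \<ge> 0" "X = {x. ereal r \<le> x}" | "X = {\<infinity>}"
      unfolding R1_carrier_def by blast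
    then show "X \<in> range F"
    proof cases
      case (1 r)
      then have "F (J r) = X" unfolding F_def using V_J ins_ereal_open by simp
      then show ?thesis by (metis rangeI)
    next
      case (2 r)
      then obtain e where e: "P e" "v e = r" using surj by blast
      then have "F e = X" unfolding F_def using V_e 2 ins_ereal_closed by simp
      then show ?thesis by (metis rangeI)
    next
      case 3
      then have "F bot = X" unfolding F_def by (simp add: V_bot)
      then show ?thesis by (metis rangeI)
    qed
  qed
qed

lemma isoR: "ml_iso m R1_carrier R1_le R1_mult"
proof -
  have inj: "inj F"
  proof (rule injI)
    fix a b assume "F a = F b"
    then show "a = b" using F_le by (metis order.antisym order_refl)
  qed
  show ?thesis unfolding ml_iso_def bij_betw_def R1_le_def
    using inj F_range F_le F_mult by blast
qed

end

context TLP
begin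

lemma caseB: assumes "\<not> pr Mx" shows "ml_iso m R1_carrier R1_le R1_mult"
proof -
  have "Mx \<noteq> bot" using assms pr_bot by auto
  then obtain u where u: "pr u" "u \<noteq> bot" "u \<le> Mx" using exists_pr_below by blast
  have "u \<noteq> top" using u(3) M_ne_top by (metis top.extremum_unique)
  then interpret R: TLR m u using u assms by unfold_locales auto
  show ?thesis by (rule R.isoR)
qed

lemma PD_iso: assumes "(UNIV::'a set) \<noteq> {bot, top}"
  shows "ml_iso m Zm_carrier Zm_le Zm_mult \<or> ml_iso m R1_carrier R1_le R1_mult"
  using caseA[OF _ assms] caseB by blast

end

definition sharpC :: "'b set \<Rightarrow> ('b \<Rightarrow> 'b \<Rightarrow> bool) \<Rightarrow> ('b \<Rightarrow> 'b \<Rightarrow> 'b) \<Rightarrow> bool" where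
  "sharpC C le mu \<longleftrightarrow> (\<forall>A1\<in>C. \<forall>A2\<in>C. \<forall>B\<in>C. le (mu A1 A2) B \<longrightarrow>
      (\<exists>B1\<in>C. \<exists>B2\<in>C. le A1 B1 \<and> le A2 B2 \<and> B = mu B1 B2))"

lemma sharp_transfer:
  fixes m :: "'a::complete_lattice \<Rightarrow> 'a \<Rightarrow> 'a"
  assumes iso: "ml_iso m C le mu" and sc: "sharpC C le mu"
  shows "sharp m"
proof -
  obtain f where f: "bij_betw f UNIV C" "\<And>a b. a \<le> b \<longleftrightarrow> le (f a) (f b)" "\<And>a b. f (m a b) = mu (f a) (f b)"
    using iso unfolding ml_iso_def by blast
  have fC: "f a \<in> C" for a using f(1) unfolding bij_betw_def by blast
  have surj: "\<exists>a. X = f a" if "X \<in> C" for X using f(1) that unfolding bij_betw_def by blast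
  have inj: "f a = f b \<Longrightarrow> a = b" for a b using f(1) unfolding bij_betw_def inj_def by blast
  show ?thesis unfolding sharp_def
  proof (intro allI impI)
    fix a1 a2 b :: 'a assume "m a1 a2 \<le> b"
    then have "le (mu (f a1) (f a2)) (f b)" using f(2,3) by metis
    then obtain B1 B2 where B: "B1 \<in> C" "B2 \<in> C" "le (f a1) B1" "le (f a2) B2" "f b = mu B1 B2"
      using sc fC unfolding sharpC_def by blast
    obtain b1 b2 where b: "B1 = f b1" "B2 = f b2" using surj B by blast
    have "a1 \<le> b1" "a2 \<le> b2" using B b f(2) by auto
    moreover have "b = m b1 b2" using B b f(3) inj by metis
    ultimately show "\<exists>b1 b2. a1 \<le> b1 \<and> a2 \<le> b2 \<and> b = m b1 b2" by blast
  qed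
qed

lemma Z_sharp: "sharpC Zm_carrier Zm_le Zm_mult"
  unfolding sharpC_def
proof (intro ballI impI)
  fix A1 A2 B assume A1: "A1 \<in> Zm_carrier" and A2: "A2 \<in> Zm_carrier" and Bc: "B \<in> Zm_carrier"
    and le: "Zm_le (Zm_mult A1 A2) B"
  have z0: "Some 0 \<in> Zm_carrier" unfolding Zm_carrier_def by auto
  have letop: "Zm_le X (Some 0)" if "X \<in> Zm_carrier" for X using that unfolding Zm_carrier_def by auto
  have multtop: "Zm_mult X (Some 0) = X" for X by (cases X) auto
  have multtop': "Zm_mult (Some 0) X = X" for X by (cases X) auto
  show "\<exists>B1\<in>Zm_carrier. \<exists>B2\<in>Zm_carrier. Zm_le A1 B1 \<and> Zm_le A2 B2 \<and> B = Zm_mult B1 B2"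
  proof (cases A1)
    case None
    then show ?thesis using Bc z0 letop[OF A2] multtop by (intro bexI[of _ B] bexI[of _ "Some 0"]) auto
  next
    case (Some a1)
    show ?thesis
    proof (cases A2)
      case None
      then show ?thesis using Bc z0 letop[OF A1] multtop' by (intro bexI[of _ "Some 0"] bexI[of _ B]) auto
    next
      case (Some a2)
      obtain b where b: "B = Some b" "b \<le> 0" using le Bc \<open>A1 = Some a1\<close> Some unfolding Zm_carrier_def by (cases B) auto
      have ab: "a1 + a2 \<le> b" using le b \<open>A1 = Some a1\<close> Some by simp
      have a2: "a2 \<le> 0" using A2 Some unfolding Zm_carrier_def by auto
      let ?B1 = "Some (max a1 b)" and ?B2 = "Some (b - max a1 b)"
      have "?B1 \<in> Zm_carrier" "?B2 \<in> Zm_carrier" using A1 b \<open>A1 = Some a1\<close> unfolding Zm_carrier_def by auto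
      moreover have "Zm_le A1 ?B1" "Zm_le A2 ?B2" "B = Zm_mult ?B1 ?B2"
        using \<open>A1 = Some a1\<close> Some b ab a2 by auto
      ultimately show ?thesis by blast
    qed
  qed
qed

definition iv :: "real \<Rightarrow> bool \<Rightarrow> ereal set" where
  "iv r c = {x. ereal r < x \<or> (c \<and> x = ereal r)}"

lemma iv_open: "{x. ereal r < x} = iv r False" unfolding iv_def by simp
lemma iv_closed: "{x. ereal r \<le> x} = iv r True" unfolding iv_def by (auto simp: le_less)

lemma R1_carrier_iv: "X \<in> R1_carrier \<longleftrightarrow> X = {\<infinity>} \<or> (\<exists>r c. r \<ge> 0 \<and> X = iv r c)"
proof
  assume "X \<in> R1_carrier" then show "X = {\<infinity>} \<or> (\<exists>r c. r \<ge> 0 \<and> X = iv r c)"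
    unfolding R1_carrier_def iv_open iv_closed by blast
next
  assume h: "X = {\<infinity>} \<or> (\<exists>r c. r \<ge> 0 \<and> X = iv r c)"
  show "X \<in> R1_carrier"
  proof (cases "X = {\<infinity>}")
    case True then show ?thesis unfolding R1_carrier_def by blast
  next
    case False
    then obtain r c where rc: "r \<ge> 0" "X = iv r c" using h by blast
    show ?thesis
    proof (cases c)
      case True
      then have "X = {x. ereal r \<le> x}" using rc iv_closed by simp
      then show ?thesis using rc(1) unfolding R1_carrier_def by blast
    next
      case False
      then have "X = {x. ereal r < x}" using rc iv_open by simp
      then show ?thesis using rc(1) unfolding R1_carrier_def by blast
    qed
  qed
qed

lemma inf_in_iv: "\<infinity> \<in> iv r c" unfolding iv_def by simp

lemma iv_sub: "iv r c \<subseteq> iv s d \<longleftrightarrow> (s < r \<or> (s = r \<and> (c \<longrightarrow> d)))"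
proof
  assume sub: "iv r c \<subseteq> iv s d"
  show "s < r \<or> (s = r \<and> (c \<longrightarrow> d))"
  proof (rule ccontr)
    assume "\<not> (s < r \<or> (s = r \<and> (c \<longrightarrow> d)))"
    then consider "r < s" | "r = s" "c" "\<not> d" by (auto simp: not_less le_less)
    then show False
    proof cases
      case 1
      have "ereal ((r + s) / 2) \<in> iv r c" unfolding iv_def using 1 by simp
      moreover have "ereal ((r + s) / 2) \<notin> iv s d" unfolding iv_def using 1 by simp
      ultimately show False using sub by blast
    next
      case 2
      have "ereal r \<in> iv r c" unfolding iv_def using 2 by simp
      moreover have "ereal r \<notin> iv s d" unfolding iv_def using 2 by simp
      ultimately show False using sub by blast
    qed
  qed
next
  assume h: "s < r \<or> (s = r \<and> (c \<longrightarrow> d))"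
  show "iv r c \<subseteq> iv s d"
  proof
    fix x assume "x \<in> iv r c"
    then have x: "ereal r < x \<or> (c \<and> x = ereal r)" unfolding iv_def by simp
    show "x \<in> iv s d"
    proof (cases "s < r")
      case True
      then have sr: "ereal s < ereal r" by simp
      have "ereal r \<le> x" using x by auto
      then have "ereal s < x" by (rule less_le_trans[OF sr])
      then show ?thesis unfolding iv_def by simp
    next
      case False then show ?thesis using h x unfolding iv_def by auto
    qed
  qed
qed

lemma inf_sub_iv: "{\<infinity>} \<subseteq> iv r c" using inf_in_iv by auto
lemma iv_not_sub_inf: "\<not> iv r c \<subseteq> {\<infinity>}"
proof
  assume "iv r c \<subseteq> {\<infinity>}"
  moreover have "ereal (r + 1) \<in> iv r c" unfolding iv_def by simp
  ultimately show False by auto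
qed

lemma iv_mult: "R1_mult (iv r c) (iv s d) = iv (r + s) (c \<and> d)"
proof (rule set_eqI)
  fix z
  show "z \<in> R1_mult (iv r c) (iv s d) \<longleftrightarrow> z \<in> iv (r + s) (c \<and> d)"
  proof
    assume "z \<in> R1_mult (iv r c) (iv s d)"
    then obtain x y where xy: "z = x + y" "x \<in> iv r c" "y \<in> iv s d" unfolding R1_mult_def by blast
    have x: "ereal r < x \<or> (c \<and> x = ereal r)" and y: "ereal s < y \<or> (d \<and> y = ereal s)"
      using xy unfolding iv_def by auto
    show "z \<in> iv (r + s) (c \<and> d)"
    proof (cases x)
      case (real a)
      show ?thesis
      proof (cases y)
        case (real b)
        have "r < a \<or> (c \<and> a = r)" using x real \<open>x = ereal a\<close> by auto
        moreover have "s < b \<or> (d \<and> b = s)" using y real by auto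
        ultimately have "r + s < a + b \<or> (c \<and> d \<and> a + b = r + s)" by auto
        then show ?thesis unfolding iv_def using xy \<open>x = ereal a\<close> real by auto
      next
        case PInf then show ?thesis unfolding iv_def using xy \<open>x = ereal a\<close> by simp
      next
        case MInf then show ?thesis using y by simp
      qed
    next
      case PInf
      have "y \<noteq> -\<infinity>" using y by auto
      then have "z = \<infinity>" using xy PInf by simp
      then show ?thesis unfolding iv_def by simp
    next
      case MInf then show ?thesis using x by simp
    qed
  next
    assume "z \<in> iv (r + s) (c \<and> d)"
    then have z: "ereal (r + s) < z \<or> (c \<and> d \<and> z = ereal (r + s))" unfolding iv_def by simp
    show "z \<in> R1_mult (iv r c) (iv s d)"
    proof (cases z)
      case (real t)
      show ?thesis
      proof (cases "c \<and> d \<and> t = r + s")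
        case True
        then have "z = ereal r + ereal s" "ereal r \<in> iv r c" "ereal s \<in> iv s d"
          using real unfolding iv_def by auto
        then show ?thesis unfolding R1_mult_def by blast
      next
        case False
        then have ts: "r + s < t" using z real by auto
        define h where "h = (t - r - s) / 2"
        have h: "0 < h" unfolding h_def using ts by simp
        have "z = ereal (r + h) + ereal (s + h)" using real unfolding h_def by simp
        moreover have "ereal (r + h) \<in> iv r c" "ereal (s + h) \<in> iv s d" using h unfolding iv_def by auto
        ultimately show ?thesis unfolding R1_mult_def by blast
      qed
    next
      case PInf
      then have "z = \<infinity> + \<infinity>" by simp
      then show ?thesis unfolding R1_mult_def using inf_in_iv by blast
    next
      case MInf then show ?thesis using z by simp
    qed
  qed
qed

lemma R1_mult_sub: "R1_mult A B \<subseteq> R1_mult B A"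
proof
  fix z assume "z \<in> R1_mult A B"
  then obtain x y where xy: "z = x + y" "x \<in> A" "y \<in> B" unfolding R1_mult_def by blast
  then have "z = y + x" by (simp add: add.commute)
  then show "z \<in> R1_mult B A" unfolding R1_mult_def using xy by blast
qed

lemma R1_mult_comm: "R1_mult A B = R1_mult B A"
  using R1_mult_sub by blast

lemma inf_mult: "X \<in> R1_carrier \<Longrightarrow> R1_mult {\<infinity>} X = {\<infinity>}"
proof -
  assume X: "X \<in> R1_carrier"
  have inX: "\<infinity> \<in> X" using X inf_in_iv unfolding R1_carrier_iv by auto
  have nm: "\<forall>y\<in>X. y \<noteq> -\<infinity>" using X unfolding R1_carrier_iv iv_def by auto
  show ?thesis
  proof
    show "R1_mult {\<infinity>} X \<subseteq> {\<infinity>}" unfolding R1_mult_def using nm by auto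
    have "(\<infinity>::ereal) = \<infinity> + \<infinity>" by simp
    then show "{\<infinity>} \<subseteq> R1_mult {\<infinity>} X" unfolding R1_mult_def using inX by blast
  qed
qed

lemma top_mult: "X \<in> R1_carrier \<Longrightarrow> R1_mult X (iv 0 True) = X"
proof -
  assume X: "X \<in> R1_carrier"
  then consider "X = {\<infinity>}" | r c where "r \<ge> 0" "X = iv r c" unfolding R1_carrier_iv by blast
  then show ?thesis
  proof cases
    case 1 then show ?thesis using inf_mult[of "iv 0 True"] R1_carrier_iv by blast
  next
    case (2 r c) then show ?thesis by (simp add: iv_mult)
  qed
qed

lemma sub_top: "X \<in> R1_carrier \<Longrightarrow> X \<subseteq> iv 0 True"
proof -
  assume "X \<in> R1_carrier"
  then consider "X = {\<infinity>}" | r c where "r \<ge> 0" "X = iv r c" unfolding R1_carrier_iv by blast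
  then show ?thesis
  proof cases
    case 1 then show ?thesis using inf_sub_iv by simp
  next
    case (2 r c)
    then have "0 < r \<or> (0 = r \<and> (c \<longrightarrow> True))" by auto
    then show ?thesis using 2 iv_sub[of r c 0 True] by simp
  qed
qed

lemma R_sharp: "sharpC R1_carrier R1_le R1_mult"
  unfolding sharpC_def R1_le_def
proof (intro ballI impI)
  fix A1 A2 B assume A1: "A1 \<in> R1_carrier" and A2: "A2 \<in> R1_carrier" and Bc: "B \<in> R1_carrier"
    and le: "R1_mult A1 A2 \<subseteq> B"
  have topc: "iv 0 True \<in> R1_carrier" unfolding R1_carrier_iv by auto
  show "\<exists>B1\<in>R1_carrier. \<exists>B2\<in>R1_carrier. A1 \<subseteq> B1 \<and> A2 \<subseteq> B2 \<and> B = R1_mult B1 B2"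
  proof (cases "A1 \<subseteq> B")
    case True
    then show ?thesis using Bc topc sub_top[OF A2] top_mult[OF Bc] by blast
  next
    case n1: False
    show ?thesis
    proof (cases "A2 \<subseteq> B")
      case True
      have "R1_mult (iv 0 True) B = R1_mult B (iv 0 True)" by (rule R1_mult_comm)
      then have eq: "B = R1_mult (iv 0 True) B" by (simp only: top_mult[OF Bc])
      show ?thesis using Bc topc sub_top[OF A1] True eq by blast
    next
      case n2: False
      have infB: "{\<infinity>} \<subseteq> B" using Bc inf_sub_iv unfolding R1_carrier_iv by auto
      have "A1 \<noteq> {\<infinity>}" using n1 infB by blast
      then obtain a1 c1 where a1: "a1 \<ge> 0" "A1 = iv a1 c1" using A1 unfolding R1_carrier_iv by blast
      have "A2 \<noteq> {\<infinity>}" using n2 infB by blast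
      then obtain a2 c2 where a2: "a2 \<ge> 0" "A2 = iv a2 c2" using A2 unfolding R1_carrier_iv by blast
      have prod: "R1_mult A1 A2 = iv (a1 + a2) (c1 \<and> c2)" using a1 a2 iv_mult by simp
      have "B \<noteq> {\<infinity>}"
      proof
        assume "B = {\<infinity>}"
        then have "iv (a1 + a2) (c1 \<and> c2) \<subseteq> {\<infinity>}" using le prod by simp
        then show False using iv_not_sub_inf by blast
      qed
      then obtain b d where b: "b \<ge> 0" "B = iv b d" using Bc unfolding R1_carrier_iv by blast
      have inc: "b < a1 + a2 \<or> (b = a1 + a2 \<and> (c1 \<and> c2 \<longrightarrow> d))" using le prod b iv_sub by simp
      have nin: "\<not> (b < a1 \<or> (b = a1 \<and> (c1 \<longrightarrow> d)))" using n1 a1 b iv_sub by simp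
      let ?B1 = "iv a1 (c1 \<or> d)" and ?B2 = "iv (b - a1) (d \<or> \<not> c1)"
      have ba: "0 \<le> b - a1" using nin by auto
      have "?B1 \<in> R1_carrier" unfolding R1_carrier_iv using a1(1) by blast
      moreover have "?B2 \<in> R1_carrier" unfolding R1_carrier_iv using ba by blast
      moreover have "A1 \<subseteq> ?B1" using a1 iv_sub by simp
      moreover have "A2 \<subseteq> ?B2" using a2 iv_sub inc nin by auto
      moreover have "B = R1_mult ?B1 ?B2"
      proof -
        have "R1_mult ?B1 ?B2 = iv (a1 + (b - a1)) ((c1 \<or> d) \<and> (d \<or> \<not> c1))" by (rule iv_mult)
        also have "\<dots> = iv b d"
        proof -
          have "a1 + (b - a1) = b" by simp
          moreover have "((c1 \<or> d) \<and> (d \<or> \<not> c1)) = d" by blast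
          ultimately show ?thesis by simp
        qed
        finally show ?thesis using b by simp
      qed
      ultimately show ?thesis by blast
    qed
  qed
qed

theorem theorem3p8:
  fixes m :: "'a::complete_lattice \<Rightarrow> 'a \<Rightarrow> 'a"
  assumes "C_lattice m"
    and "lattice_domain m"
    and "(UNIV :: 'a set) \<noteq> {bot, top}"
    and "\<forall>x y :: 'a. x \<le> y \<or> y \<le> x"
    and "\<forall>x :: 'a. \<exists>S. (\<forall>s\<in>S. principal_el m s) \<and> x = Sup S"
  shows "(sharp m \<longleftrightarrow> pseudo_Dedekind m) \<and>
         (pseudo_Dedekind m \<longleftrightarrow>
            (ml_iso m Zm_carrier Zm_le Zm_mult \<or> ml_iso m R1_carrier R1_le R1_mult))"
proof -
  have tl: "TL m" by (rule TL.intro) (use assms in \<open>auto simp: C_lattice_def\<close>)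
  interpret TL m by (rule tl)
  have s2p: "sharp m \<Longrightarrow> pseudo_Dedekind m" by (rule sharp_PD)
  have p2i: "ml_iso m Zm_carrier Zm_le Zm_mult \<or> ml_iso m R1_carrier R1_le R1_mult"
    if PD: "pseudo_Dedekind m"
  proof -
    have "TLP m" by (rule TLP.intro[OF tl]) (rule TLP_axioms.intro[OF PD])
    then interpret P: TLP m .
    show ?thesis by (rule P.PD_iso[OF assms(3)])
  qed
  have i2s: "sharp m" if "ml_iso m Zm_carrier Zm_le Zm_mult \<or> ml_iso m R1_carrier R1_le R1_mult"
    using that sharp_transfer[OF _ Z_sharp, of m] sharp_transfer[OF _ R_sharp, of m] by blast
  show ?thesis using s2p p2i i2s by blast
qed

end
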